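(* Let $f$ be a complex polynomial of degree $d$ with $f(0)\ne0$, with roots $\zeta_1,\dots,\zeta_d$ (counted with multiplicity) ordered so that $|\zeta_1|\le\cdots\le|\zeta_d|$. For $N\ge0$ let $g=G^Nf=\sum_i g_ix^i$, let $r^{(N)}:[0,d]\to\mathbb{R}\cup\{+\infty\}$ be the piecewise linear function with $r^{(N)}(i)=-2^{-N}\log|g_i|$ for $i=0,\dots,d$, and let $\varphi^{(N)}$ be its convex hull (the greatest convex function on $[0,d]$ bounded above by $r^{(N)}$). Then for every $i=1,\dots,d$, \[ \lim_{N\to\infty}\big(\varphi^{(N)}(i)-\varphi^{(N)}(i-1)\big)=\log|\zeta_i|, \] and moreover $\big|\varphi^{(N)}(i)-\varphi^{(N)}(i-1)-\log|\zeta_i|\big|\le 2^{-N}\log(2d)$ for every $N$.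
   Context: $\log$ is the natural logarithm. The Graeffe operator maps a degree $d$ polynomial $f$ to $Gf(x)=(-1)^d f(\sqrt{x})f(-\sqrt{x})$, again of degree $d$; $G^N$ is its $N$-th iterate. The function $\varphi^{(N)}$ is called the $N$-th Renormalized Newton Diagram of $f$. *)

theory Defs
  imports "HOL-Analysis.Analysis" "HOL-Computational_Algebra.Polynomial"
begin

text \<open>Graeffe operator: (G f)(x^2) = (-1)^d f(x) f(-x), i.e. the coefficient of x^i in G f
  is (-1)^d times the coefficient of x^(2i) in f(x) f(-x).\<close>
definition graeffe :: "complex poly \<Rightarrow> complex poly" where
  "graeffe f = smult ((-1) ^ degree f)
     (Poly (map (\<lambda>i. coeff (f * pcompose f [:0, -1:]) (2 * i)) [0..<Suc (degree f)]))"

definition newton_pt :: "complex poly \<Rightarrow> nat \<Rightarrow> nat \<Rightarrow> ereal" where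
  "newton_pt f N i = (let c = coeff ((graeffe ^^ N) f) i in
      if c = 0 then \<infinity> else ereal (- ln (norm c) / 2 ^ N))"

definition newton_r :: "complex poly \<Rightarrow> nat \<Rightarrow> real \<Rightarrow> ereal" where
  "newton_r f N t = (let k = nat \<lfloor>t\<rfloor>; s = t - real k in
      ereal (1 - s) * newton_pt f N k + ereal s * newton_pt f N (Suc k))"

definition rnd :: "complex poly \<Rightarrow> nat \<Rightarrow> real \<Rightarrow> real" where
  "rnd f N t = Sup {h t | h. convex_on {0..real (degree f)} h \<and>
      (\<forall>s\<in>{0..real (degree f)}. ereal (h s) \<le> newton_r f N s)}"

end

theory Submission
  imports Defs "HOL-Computational_Algebra.Polynomial_FPS"
begin


definition geomz :: "complex \<Rightarrow> complex fps" where
  "geomz z = Abs_fps (\<lambda>n. z ^ n)"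

lemma geomz_inv: "fps_of_poly [:1, - z:] * geomz z = 1"
proof (rule fps_ext)
  fix n
  have e: "fps_of_poly [:1, - z:] = 1 - fps_const z * fps_X"
    by (simp add: fps_of_poly_pCons fps_const_neg)
  show "fps_nth (fps_of_poly [:1, - z:] * geomz z) n = fps_nth (1::complex fps) n"
    unfolding e by (cases n) (auto simp: algebra_simps geomz_def)
qed

lemma geomz_prod_bound:
  assumes "finite K" "\<And>k. k \<in> K \<Longrightarrow> norm (z k) \<le> \<sigma>"
  shows "norm (fps_nth (\<Prod>k\<in>K. geomz (z k)) l) \<le> (real (card K) * \<sigma>) ^ l"
  using assms
proof (induction K arbitrary: l rule: finite_induct)
  case empty
  then show ?case by (cases l) auto
next
  case (insert k K)
  have s0: "0 \<le> \<sigma>" using insert.prems(1)[of k] by (meson insertI1 norm_ge_zero order_trans)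
  have geo: "(\<Sum>j\<le>l. (n::real) ^ j) \<le> (n + 1) ^ l" if "n \<ge> 0" for n l
  proof (induction l)
    case 0 then show ?case by simp
  next
    case (Suc l)
    have "(\<Sum>j\<le>Suc l. n ^ j) = 1 + n * (\<Sum>j\<le>l. n ^ j)"
      by (simp add: sum.atMost_Suc_shift sum_distrib_left del: sum.atMost_Suc)
    also have "\<dots> \<le> 1 + n * (n+1)^l" using Suc that by (simp add: mult_left_mono)
    also have "\<dots> \<le> (n+1)^Suc l" using that by (simp add: algebra_simps)
    finally show ?case .
  qed
  let ?n = "real (card K)"
  have "fps_nth (\<Prod>k\<in>insert k K. geomz (z k)) l = fps_nth (geomz (z k) * (\<Prod>k\<in>K. geomz (z k))) l"
    using insert by simp
  also have "\<dots> = (\<Sum>i=0..l. z k ^ i * fps_nth (\<Prod>k\<in>K. geomz (z k)) (l - i))"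
    by (simp add: fps_mult_nth geomz_def)
  finally have "norm (fps_nth (\<Prod>k\<in>insert k K. geomz (z k)) l) \<le> (\<Sum>i=0..l. \<sigma> ^ i * (?n * \<sigma>) ^ (l - i))"
    apply (rule ssubst)
    apply (rule order.trans[OF norm_sum sum_mono])
    apply (simp add: norm_mult norm_power)
    apply (rule mult_mono)
    using insert s0 by (auto intro!: power_mono)
  also have "\<dots> = (\<Sum>i=0..l. \<sigma> ^ l * ?n ^ (l - i))"
    by (intro sum.cong refl) (simp add: power_mult_distrib power_add[symmetric])
  also have "\<dots> = \<sigma> ^ l * (\<Sum>i=0..l. ?n ^ (l - i))" by (simp add: sum_distrib_left)
  also have "(\<Sum>i=0..l. ?n ^ (l - i)) = (\<Sum>j\<le>l. ?n ^ j)"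
    by (rule sum.reindex_bij_witness[of _ "\<lambda>j. l - j" "\<lambda>i. l - i"]) auto
  also have "\<sigma> ^ l * (\<Sum>j\<le>l. ?n ^ j) \<le> \<sigma> ^ l * (?n + 1) ^ l"
    using geo[of ?n l] s0 by (simp add: mult_left_mono)
  also have "\<dots> = (real (card (insert k K)) * \<sigma>) ^ l"
    using insert by (simp add: power_mult_distrib[symmetric] mult.commute add.commute)
  finally show ?case .
qed

lemma geom_half_sum: "(\<Sum>i<J. ((1::real)/2) ^ (J - i)) \<le> 1"
proof -
  have "(\<Sum>i<J. ((1::real)/2) ^ (J - i)) = (\<Sum>l<J. (1/2) ^ Suc l)"
  proof (rule sum.reindex_bij_witness[of _ "\<lambda>l. J - Suc l" "\<lambda>i. J - Suc i"])
    fix i assume "i \<in> {..<J}"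
    then have "J - i = Suc (J - Suc i)" by auto
    then show "((1::real)/2) ^ Suc (J - Suc i) = (1/2) ^ (J - i)" by simp
  qed auto
  also have "\<dots> = (1/2) * (\<Sum>l<J. (1/2) ^ l)" by (simp add: sum_distrib_left)
  also have "(\<Sum>l<J. ((1::real)/2) ^ l) = (1 - (1/2)^J) / (1 - 1/2)"
    by (simp add: sum_gp_strict)
  also have "(1/2) * ((1 - (1/2)^J) / (1 - 1/2)) \<le> (1::real)" by simp
  finally show ?thesis .
qed

lemma core:
  fixes h p :: "complex poly" and z :: "nat \<Rightarrow> complex"
  assumes hp: "h = p * (\<Prod>k\<in>K. [:1, - z k:])" and fin: "finite K" and dp: "degree p \<le> a"
    and zs: "\<And>k. k\<in>K \<Longrightarrow> norm (z k) \<le> \<sigma>"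
    and small: "real (card K) * \<sigma> * \<rho> \<le> 1/2" and rp: "\<rho> > 0"
  shows "norm (coeff h J) * \<rho>^J \<le> Max ((\<lambda>m. norm (coeff h m) * \<rho>^m) ` {..a})"
proof -
  define \<beta> where "\<beta> = (\<Prod>k\<in>K. geomz (z k))"
  define M where "M = Max ((\<lambda>m. norm (coeff h m) * \<rho>^m) ` {..a})"
  have s0: "0 \<le> \<sigma>" if ne: "K \<noteq> {}"
  proof -
    obtain k where "k \<in> K" using ne by auto
    then show ?thesis using zs[of k] by (meson norm_ge_zero order_trans)
  qed
  have prodeq: "fps_of_poly h * \<beta> = fps_of_poly p"
  proof -
    have "fps_of_poly h * \<beta> = fps_of_poly p * (\<Prod>k\<in>K. fps_of_poly [:1, - z k:] * geomz (z k))"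
      by (simp add: hp \<beta>_def fps_of_poly_mult fps_of_poly_prod prod.distrib mult.assoc)
    also have "\<dots> = fps_of_poly p" by (simp add: geomz_inv)
    finally show ?thesis .
  qed
  have b0: "fps_nth \<beta> 0 = 1" unfolding \<beta>_def using fin
    by (induction K rule: finite_induct) (auto simp: geomz_def)
  have bb: "norm (fps_nth \<beta> l) * \<rho> ^ l \<le> (1/2) ^ l" for l
  proof -
    have "norm (fps_nth \<beta> l) \<le> (real (card K) * \<sigma>) ^ l"
      unfolding \<beta>_def by (rule geomz_prod_bound[OF fin zs])
    then have "norm (fps_nth \<beta> l) * \<rho> ^ l \<le> (real (card K) * \<sigma>) ^ l * \<rho> ^ l"
      using rp by (simp add: mult_right_mono)
    also have "\<dots> = (real (card K) * \<sigma> * \<rho>) ^ l" by (simp add: power_mult_distrib)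
    also have "\<dots> \<le> (1/2) ^ l"
    proof (cases "K = {}")
      case True then show ?thesis by (cases l) auto
    next
      case False then show ?thesis using s0 rp small by (intro power_mono) auto
    qed
    finally show ?thesis .
  qed
  have rec: "coeff h J = - (\<Sum>i<J. coeff h i * fps_nth \<beta> (J - i))" if "J > a" for J
  proof -
    have "coeff p J = 0" using that dp by (simp add: coeff_eq_0)
    then have "fps_nth (fps_of_poly h * \<beta>) J = 0" by (simp add: prodeq)
    then have "(\<Sum>i=0..J. coeff h i * fps_nth \<beta> (J - i)) = 0" by (simp add: fps_mult_nth)
    moreover have "(\<Sum>i=0..J. coeff h i * fps_nth \<beta> (J - i)) = (\<Sum>i<J. coeff h i * fps_nth \<beta> (J - i)) + coeff h J"
      by (simp add: b0 atLeast0AtMost lessThan_Suc_atMost[symmetric])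
    ultimately show ?thesis by (simp add: eq_neg_iff_add_eq_0 add.commute)
  qed
  have M0: "0 \<le> M" unfolding M_def
    by (rule order.trans[OF _ Max_ge[of _ "norm (coeff h 0) * \<rho>^0"]]) (auto intro!: image_eqI[of _ _ 0])
  have "norm (coeff h J) * \<rho>^J \<le> M" for J
  proof (induction J rule: less_induct)
    case (less J)
    show ?case
    proof (cases "J \<le> a")
      case True then show ?thesis unfolding M_def by (intro Max_ge) auto
    next
      case False
      have "norm (coeff h J) * \<rho>^J = norm (\<Sum>i<J. coeff h i * fps_nth \<beta> (J - i)) * \<rho>^J"
        using rec[of J] False by simp
      also have "\<dots> \<le> (\<Sum>i<J. norm (coeff h i) * norm (fps_nth \<beta> (J - i))) * \<rho>^J"
        using rp by (intro mult_right_mono order.trans[OF norm_sum]) (auto simp: norm_mult)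
      also have "\<dots> = (\<Sum>i<J. (norm (coeff h i) * \<rho>^i) * (norm (fps_nth \<beta> (J - i)) * \<rho>^(J-i)))"
        unfolding sum_distrib_right
      proof (intro sum.cong refl)
        fix i assume "i \<in> {..<J}"
        then have "\<rho>^J = \<rho>^i * \<rho>^(J-i)" by (simp add: power_add[symmetric])
        then show "norm (coeff h i) * norm (fps_nth \<beta> (J - i)) * \<rho>^J = norm (coeff h i) * \<rho>^i * (norm (fps_nth \<beta> (J - i)) * \<rho>^(J-i))"
          by simp
      qed
      also have "\<dots> \<le> (\<Sum>i<J. M * (1/2)^(J-i))"
        using M0 rp by (intro sum_mono mult_mono less.IH bb) auto
      also have "\<dots> = M * (\<Sum>i<J. (1/2)^(J-i))" by (simp add: sum_distrib_left)
      also have "\<dots> \<le> M * 1" using M0 geom_half_sum by (intro mult_left_mono) auto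
      finally show ?thesis by simp
    qed
  qed
  then show ?thesis unfolding M_def .
qed



lemma coeff_pcompose_x2: "coeff (pcompose (q::complex poly) [:0,0,1:]) (2*i) = coeff q i"
proof (induction q arbitrary: i)
  case 0 then show ?case by simp
next
  case (pCons a q)
  show ?case
  proof (cases i)
    case 0 then show ?thesis by (simp add: pcompose_pCons)
  next
    case (Suc j)
    have "2 * i = Suc (Suc (2 * j))" using Suc by simp
    then show ?thesis using pCons.IH[of j] Suc by (simp add: pcompose_pCons)
  qed
qed

lemma neg1_pow_poly: "(-1::complex poly)^d * x = smult ((-1)^d) x"
  by (induction d) (auto simp: mult.assoc)

lemma Poly_coeffs_upto: "degree q \<le> d \<Longrightarrow> Poly (map (\<lambda>i. coeff q i) [0..<Suc d]) = q"
  by (rule poly_eqI) (auto simp: nth_default_def coeff_eq_0 simp del: upt_Suc)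

lemma degree_lin_prod: "degree (\<Prod>k\<in>A. [:- (w k), 1::complex:]) = card A"
proof -
  have "degree (\<Prod>k\<in>A. [:- (w k), 1::complex:]) = (\<Sum>k\<in>A. degree [:- (w k), 1::complex:])"
    by (rule degree_prod_eq_sum_degree) auto
  then show ?thesis by simp
qed

lemma graeffe_prod:
  fixes c :: complex and w :: "nat \<Rightarrow> complex"
  assumes "c \<noteq> 0"
  shows "graeffe (smult c (\<Prod>k=1..d. [:- w k, 1:])) = smult (c^2) (\<Prod>k=1..d. [:- ((w k)^2), 1:])"
proof -
  let ?P = "smult c (\<Prod>k=1..d. [:- w k, 1:])"
  let ?Q = "\<Prod>k=1..d. [:- ((w k)^2), 1:]"
  have dP: "degree ?P = d" using assms degree_lin_prod[of w "{1..d}"] by simp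
  have dQ: "degree ?Q = d" using degree_lin_prod[of "\<lambda>k. (w k)^2" "{1..d}"] by simp
  have "pcompose ?P [:0, -1:] = smult c (\<Prod>k=1..d. [:- w k, -1:])"
    by (simp add: pcompose_smult pcompose_prod pcompose_pCons)
  then have "?P * pcompose ?P [:0, -1:] = smult (c*c) ((\<Prod>k=1..d. [:- w k, 1:]) * (\<Prod>k=1..d. [:- w k, -1:]))"
    by (simp add: mult_ac)
  also have "(\<Prod>k=1..d. [:- w k, 1:]) * (\<Prod>k=1..d. [:- w k, -1:]) = (\<Prod>k=1..d. [:- w k, 1:] * [:- w k, -1:])"
    by (rule prod.distrib[symmetric])
  also have "(\<Prod>k=1..d. [:- w k, 1:] * [:- w k, -1:]) = (\<Prod>k=1..d. smult (-1) (pcompose [:- ((w k)^2), 1:] [:0,0,1:]))"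
    by (intro prod.cong refl) (simp add: pcompose_pCons power2_eq_square)
  also have "\<dots> = smult ((-1)^d) (pcompose ?Q [:0,0,1:])"
    by (simp add: prod_uminus pcompose_prod neg1_pow_poly del: pcompose_pCons)
  finally have e: "?P * pcompose ?P [:0, -1:] = smult (c * c * (-1)^d) (pcompose ?Q [:0,0,1:])"
    by simp
  have m: "map (\<lambda>i. coeff (?P * pcompose ?P [:0, -1:]) (2 * i)) [0..<Suc d]
      = map (\<lambda>i. coeff (smult (c * c * (-1)^d) ?Q) i) [0..<Suc d]"
    unfolding e by (simp add: coeff_pcompose_x2)
  have "graeffe ?P = smult ((-1)^d) (Poly (map (\<lambda>i. coeff (?P * pcompose ?P [:0, -1:]) (2 * i)) [0..<Suc d]))"
    unfolding graeffe_def dP by (rule refl)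
  also have "\<dots> = smult ((-1)^d) (Poly (map (\<lambda>i. coeff (smult (c * c * (-1)^d) ?Q) i) [0..<Suc d]))"
    by (simp only: m)
  also have "\<dots> = smult ((-1)^d) (smult (c * c * (-1)^d) ?Q)"
    using dQ by (subst Poly_coeffs_upto) auto
  also have "\<dots> = smult (c^2) ?Q"
    by (simp add: power2_eq_square mult_ac flip: power_mult_distrib)
  finally show ?thesis .
qed

lemma graeffe_iter:
  fixes c :: complex and w :: "nat \<Rightarrow> complex"
  assumes "c \<noteq> 0"
  shows "(graeffe ^^ N) (smult c (\<Prod>k=1..d. [:- w k, 1:])) = smult (c^(2^N)) (\<Prod>k=1..d. [:- ((w k)^(2^N)), 1:])"
proof (induction N)
  case 0 then show ?case by simp
next
  case (Suc N)
  have "(graeffe ^^ Suc N) (smult c (\<Prod>k=1..d. [:- w k, 1:])) = graeffe (smult (c^(2^N)) (\<Prod>k=1..d. [:- ((w k)^(2^N)), 1:]))"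
    using Suc by simp
  also have "\<dots> = smult ((c^(2^N))^2) (\<Prod>k=1..d. [:- (((w k)^(2^N))^2), 1:])"
    using assms by (intro graeffe_prod) simp
  finally show ?case by (simp add: power_mult[symmetric] mult.commute)
qed



definition adm :: "complex poly \<Rightarrow> nat \<Rightarrow> (real \<Rightarrow> real) \<Rightarrow> bool" where
  "adm f N h \<longleftrightarrow> convex_on {0..real (degree f)} h \<and>
      (\<forall>s\<in>{0..real (degree f)}. ereal (h s) \<le> newton_r f N s)"

lemma rnd_adm: "rnd f N t = Sup {h t | h. adm f N h}"
  unfolding rnd_def adm_def by simp

lemma newton_r_nat: "newton_r f N (real k) = newton_pt f N k"
  unfolding newton_r_def Let_def by (simp add: zero_ereal_def[symmetric])

lemma line_below_r:
  assumes l: "\<And>k. ereal (\<alpha> + \<tau> * real k) \<le> newton_pt f N k" and s: "0 \<le> s"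
  shows "ereal (\<alpha> + \<tau> * s) \<le> newton_r f N s"
proof -
  define k where "k = nat \<lfloor>s\<rfloor>"
  define \<sigma> where "\<sigma> = s - real k"
  have rk: "real k = of_int \<lfloor>s\<rfloor>" using s unfolding k_def by simp
  have s0: "0 \<le> \<sigma>" "\<sigma> \<le> 1" unfolding \<sigma>_def rk
    using of_int_floor_le[of s] real_of_int_floor_add_one_gt[of s] by linarith+
  have "\<alpha> + \<tau> * s = (1 - \<sigma>) * (\<alpha> + \<tau> * real k) + \<sigma> * (\<alpha> + \<tau> * real (Suc k))"
    unfolding \<sigma>_def by (simp add: algebra_simps)
  then have "ereal (\<alpha> + \<tau> * s) = ereal (1 - \<sigma>) * ereal (\<alpha> + \<tau> * real k) + ereal \<sigma> * ereal (\<alpha> + \<tau> * real (Suc k))"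
    by simp
  also have "\<dots> \<le> ereal (1 - \<sigma>) * newton_pt f N k + ereal \<sigma> * newton_pt f N (Suc k)"
    using s0 by (intro add_mono ereal_mult_left_mono l) auto
  also have "\<dots> = newton_r f N s"
    unfolding newton_r_def Let_def k_def[symmetric] \<sigma>_def[symmetric] ..
  finally show ?thesis .
qed

lemma line_adm:
  assumes l: "\<And>k. ereal (\<alpha> + \<tau> * real k) \<le> newton_pt f N k"
  shows "adm f N (\<lambda>s. \<alpha> + \<tau> * s)"
  unfolding adm_def
proof (intro conjI ballI)
  show "convex_on {0..real (degree f)} (\<lambda>s. \<alpha> + \<tau> * s)"
    unfolding convex_on_def
  proof (intro conjI ballI allI impI)
    fix x y u v :: real assume "u + v = 1"
    then show "\<alpha> + \<tau> * (u *\<^sub>R x + v *\<^sub>R y) \<le> u * (\<alpha> + \<tau> * x) + v * (\<alpha> + \<tau> * y)"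
      by (simp add: algebra_simps) (metis distrib_left mult.right_neutral order_refl)
  qed (simp add: convex_real_interval)
next
  fix s assume "s \<in> {0..real (degree f)}"
  then show "ereal (\<alpha> + \<tau> * s) \<le> newton_r f N s" using line_below_r[OF l] by auto
qed

lemma adm_bound:
  assumes h: "adm f N h" and a0: "newton_pt f N 0 = ereal a0" and aD: "newton_pt f N (degree f) = ereal aD"
    and D: "degree f > 0" and t: "t \<in> {0..real (degree f)}"
  shows "h t \<le> max a0 aD"
proof -
  let ?D = "real (degree f)"
  have c: "convex_on {0..?D} h" and le: "\<And>s. s \<in> {0..?D} \<Longrightarrow> ereal (h s) \<le> newton_r f N s"
    using h unfolding adm_def by auto
  have "ereal (h 0) \<le> newton_r f N (real 0)" using le[of 0] by simp
  then have h0: "h 0 \<le> a0" using a0 newton_r_nat[of f N 0] by simp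
  have "ereal (h ?D) \<le> newton_r f N ?D" using le[of ?D] by simp
  then have hD: "h ?D \<le> aD" using aD by (simp add: newton_r_nat)
  define lam where "lam = t / ?D"
  have l01: "0 \<le> lam" "lam \<le> 1" using t D unfolding lam_def by auto
  have "t = (1 - lam) *\<^sub>R 0 + lam *\<^sub>R ?D" using D unfolding lam_def by simp
  then have "h t \<le> (1 - lam) * h 0 + lam * h ?D"
    using convex_onD[OF c l01, of 0 ?D] by simp
  also have "\<dots> \<le> (1 - lam) * max a0 aD + lam * max a0 aD"
    using h0 hD l01 by (intro add_mono mult_left_mono) auto
  finally show ?thesis by (simp add: algebra_simps)
qed

lemma rnd_ge:
  assumes "adm f N h" "newton_pt f N 0 = ereal a0" "newton_pt f N (degree f) = ereal aD"
    "degree f > 0" "t \<in> {0..real (degree f)}"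
  shows "h t \<le> rnd f N t"
  unfolding rnd_adm
proof (rule cSup_upper)
  show "h t \<in> {h t |h. adm f N h}" using assms by auto
  show "bdd_above {h t |h. adm f N h}"
    using adm_bound[OF _ assms(2-5)] by (auto intro!: bdd_aboveI[of _ "max a0 aD"])
qed

lemma rnd_le_pt:
  assumes "adm f N h0" "newton_pt f N k = ereal x" "k \<le> degree f"
  shows "rnd f N (real k) \<le> x"
  unfolding rnd_adm
proof (rule cSup_least)
  show "{h (real k) |h. adm f N h} \<noteq> {}" using assms by auto
  fix y assume "y \<in> {h (real k) |h. adm f N h}"
  then obtain h where y: "y = h (real k)" and h: "adm f N h" by auto
  then have "ereal (h (real k)) \<le> newton_r f N (real k)" using assms(3) unfolding adm_def by auto
  then show "y \<le> x" using y assms(2) by (simp add: newton_r_nat)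
qed

lemma rnd_convex:
  assumes "adm f N h0" "newton_pt f N 0 = ereal a0" "newton_pt f N (degree f) = ereal aD"
    "degree f > 0" and a: "a \<in> {0..real (degree f)}" and b: "b \<in> {0..real (degree f)}"
    and l: "0 \<le> lam" "lam \<le> 1"
  shows "rnd f N ((1 - lam) * a + lam * b) \<le> (1 - lam) * rnd f N a + lam * rnd f N b"
  unfolding rnd_adm[of f N "(1 - lam) * a + lam * b"]
proof (rule cSup_least)
  show "{h ((1 - lam) * a + lam * b) |h. adm f N h} \<noteq> {}" using assms by auto
  fix y assume "y \<in> {h ((1 - lam) * a + lam * b) |h. adm f N h}"
  then obtain h where y: "y = h ((1 - lam) * a + lam * b)" and h: "adm f N h" by auto
  have c: "convex_on {0..real (degree f)} h" using h unfolding adm_def by auto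
  have "y \<le> (1 - lam) * h a + lam * h b" using convex_onD[OF c l a b] y by simp
  also have "\<dots> \<le> (1 - lam) * rnd f N a + lam * rnd f N b"
    using l rnd_ge[OF h assms(2-4) a] rnd_ge[OF h assms(2-4) b]
    by (intro add_mono mult_left_mono) auto
  finally show "y \<le> (1 - lam) * rnd f N a + lam * rnd f N b" .
qed

lemma slope_lower:
  assumes l: "\<And>k. ereal (\<alpha> + \<tau> * real k) \<le> newton_pt f N k"
    and vm: "newton_pt f N m = ereal (\<alpha> + \<tau> * real m)" and mi: "m < i" and iD: "i \<le> degree f"
    and e: "newton_pt f N 0 = ereal a0" "newton_pt f N (degree f) = ereal aD"
  shows "\<tau> \<le> rnd f N (real i) - rnd f N (real i - 1)"
proof -
  have D: "degree f > 0" using mi iD by linarith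
  have ad: "adm f N (\<lambda>s. \<alpha> + \<tau> * s)" by (rule line_adm[OF l])
  have pm: "rnd f N (real m) = \<alpha> + \<tau> * real m"
    using rnd_le_pt[OF ad vm] rnd_ge[OF ad e D, of "real m"] mi iD by auto
  have pi: "\<alpha> + \<tau> * real i \<le> rnd f N (real i)"
    using rnd_ge[OF ad e D, of "real i"] iD by auto
  define \<delta> where "\<delta> = real i - real m"
  have dpos: "\<delta> \<ge> 1" using mi unfolding \<delta>_def by linarith
  define lam where "lam = (real i - 1 - real m) / \<delta>"
  have l01: "0 \<le> lam" "lam \<le> 1" using dpos mi unfolding lam_def \<delta>_def by (auto simp: field_simps)
  have "lam * \<delta> = real i - 1 - real m" using dpos unfolding lam_def by simp
  then have pt: "(1 - lam) * real m + lam * real i = real i - 1"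
    unfolding \<delta>_def by (simp add: algebra_simps)
  have "rnd f N (real i - 1) \<le> (1 - lam) * rnd f N (real m) + lam * rnd f N (real i)"
    using rnd_convex[OF ad e D _ _ l01, of "real m" "real i"] mi iD pt by auto
  then have "rnd f N (real i) - rnd f N (real i - 1) \<ge> (1 - lam) * (rnd f N (real i) - rnd f N (real m))"
    by (simp add: algebra_simps)
  moreover have "1 - lam = 1 / \<delta>" using dpos unfolding lam_def by (simp add: field_simps \<delta>_def)
  moreover have "rnd f N (real i) - rnd f N (real m) \<ge> \<tau> * \<delta>"
    using pm pi unfolding \<delta>_def by (simp add: algebra_simps)
  ultimately have "rnd f N (real i) - rnd f N (real i - 1) \<ge> (1 / \<delta>) * (\<tau> * \<delta>)"
    using dpos by (smt (verit) divide_nonneg_nonneg mult_left_mono)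
  then show ?thesis using dpos by simp
qed

lemma slope_upper:
  assumes l: "\<And>k. ereal (\<alpha> + \<tau> * real k) \<le> newton_pt f N k"
    and vj: "newton_pt f N j = ereal (\<alpha> + \<tau> * real j)" and ij: "i \<le> j" and i1: "1 \<le> i" and jD: "j \<le> degree f"
    and e: "newton_pt f N 0 = ereal a0" "newton_pt f N (degree f) = ereal aD"
  shows "rnd f N (real i) - rnd f N (real i - 1) \<le> \<tau>"
proof -
  have D: "degree f > 0" using ij i1 jD by linarith
  have ad: "adm f N (\<lambda>s. \<alpha> + \<tau> * s)" by (rule line_adm[OF l])
  have pj: "rnd f N (real j) = \<alpha> + \<tau> * real j"
    using rnd_le_pt[OF ad vj] rnd_ge[OF ad e D, of "real j"] jD by auto
  have pi: "\<alpha> + \<tau> * (real i - 1) \<le> rnd f N (real i - 1)"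
    using rnd_ge[OF ad e D, of "real i - 1"] ij jD i1 by auto
  define \<delta> where "\<delta> = real j - real i + 1"
  have dpos: "\<delta> \<ge> 1" using ij unfolding \<delta>_def by linarith
  define lam where "lam = 1 / \<delta>"
  have l01: "0 \<le> lam" "lam \<le> 1" using dpos unfolding lam_def by auto
  have "lam * \<delta> = 1" using dpos unfolding lam_def by simp
  then have pt: "(1 - lam) * (real i - 1) + lam * real j = real i"
    unfolding \<delta>_def by (simp add: algebra_simps)
  have "rnd f N (real i) \<le> (1 - lam) * rnd f N (real i - 1) + lam * rnd f N (real j)"
    using rnd_convex[OF ad e D _ _ l01, of "real i - 1" "real j"] ij jD i1 pt by auto
  then have "rnd f N (real i) - rnd f N (real i - 1) \<le> lam * (rnd f N (real j) - rnd f N (real i - 1))"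
    by (simp add: algebra_simps)
  moreover have "rnd f N (real j) - rnd f N (real i - 1) \<le> \<tau> * \<delta>"
    using pj pi unfolding \<delta>_def by (simp add: algebra_simps)
  ultimately have "rnd f N (real i) - rnd f N (real i - 1) \<le> lam * (\<tau> * \<delta>)"
    using l01 by (smt (verit) mult_left_mono)
  then show ?thesis using dpos unfolding lam_def by simp
qed



lemma maxterm_line:
  fixes f :: "complex poly"
  assumes rp: "\<rho> > 0" and gm: "coeff ((graeffe^^N) f) m \<noteq> 0"
    and mx: "\<And>k. norm (coeff ((graeffe^^N) f) k) * \<rho>^k \<le> norm (coeff ((graeffe^^N) f) m) * \<rho>^m"
  shows "\<exists>\<alpha>. (\<forall>k. ereal (\<alpha> + (ln \<rho> / 2^N) * real k) \<le> newton_pt f N k) \<and>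
             newton_pt f N m = ereal (\<alpha> + (ln \<rho> / 2^N) * real m)"
proof -
  let ?g = "(graeffe^^N) f"
  define \<alpha> where "\<alpha> = - ln (norm (coeff ?g m)) / 2^N - (ln \<rho> / 2^N) * real m"
  have "\<forall>k. ereal (\<alpha> + (ln \<rho> / 2^N) * real k) \<le> newton_pt f N k"
  proof
    fix k
    show "ereal (\<alpha> + (ln \<rho> / 2^N) * real k) \<le> newton_pt f N k"
    proof (cases "coeff ?g k = 0")
      case True then show ?thesis by (simp add: newton_pt_def)
    next
      case False
      have "ln (norm (coeff ?g k) * \<rho>^k) \<le> ln (norm (coeff ?g m) * \<rho>^m)"
        using mx[of k] False gm rp by (subst ln_le_cancel_iff) auto
      then have "ln (norm (coeff ?g k)) + real k * ln \<rho> \<le> ln (norm (coeff ?g m)) + real m * ln \<rho>"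
        using False gm rp by (simp add: ln_mult ln_realpow)
      then have "(- ln (norm (coeff ?g m)) + ln \<rho> * (real k - real m)) / 2^N \<le> - ln (norm (coeff ?g k)) / 2^N"
        by (intro divide_right_mono) (auto simp: algebra_simps)
      moreover have "\<alpha> + (ln \<rho> / 2^N) * real k = (- ln (norm (coeff ?g m)) + ln \<rho> * (real k - real m)) / 2^N"
        unfolding \<alpha>_def by (simp add: field_simps)
      ultimately show ?thesis using False by (simp add: newton_pt_def)
    qed
  qed
  moreover have "newton_pt f N m = ereal (\<alpha> + (ln \<rho> / 2^N) * real m)"
    using gm unfolding \<alpha>_def newton_pt_def Let_def by simp
  ultimately show ?thesis by blast
qed

lemma prod_smult_poly:
  "finite K \<Longrightarrow> (\<Prod>k\<in>K. smult (a k) (q k :: complex poly)) = smult (\<Prod>k\<in>K. a k) (\<Prod>k\<in>K. q k)"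
  by (induction K rule: finite_induct) (auto simp: mult_ac)

lemma degree_lin_prod_le: "finite A \<Longrightarrow> degree (\<Prod>k\<in>A. [:1, - (w k) :: complex:]) \<le> card A"
proof -
  assume A: "finite A"
  have "degree (\<Prod>k\<in>A. [:1, - (w k) :: complex:]) \<le> (\<Sum>k\<in>A. degree [:1, - (w k) :: complex:])"
    using degree_prod_sum_le[OF A, of "\<lambda>k. [:1, - w k:]"] by (simp only: o_def)
  also have "\<dots> \<le> (\<Sum>k\<in>A. 1)" by (intro sum_mono) auto
  finally show ?thesis by simp
qed

lemma slope_bounds:
  fixes f :: "complex poly" and d :: nat and \<zeta> :: "nat \<Rightarrow> complex"
  assumes df: "degree f = d"
    and f0: "poly f 0 \<noteq> 0"
    and fprod: "f = smult (lead_coeff f) (\<Prod>i=1..d. [:- \<zeta> i, 1:])"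
    and mono1: "\<And>i. 1 \<le> i \<Longrightarrow> i < d \<Longrightarrow> norm (\<zeta> i) \<le> norm (\<zeta> (Suc i))"
    and i: "1 \<le> i" "i \<le> d"
  shows "ln (norm (\<zeta> i)) - ln (2 * real d) / 2 ^ N \<le> rnd f N (real i) - rnd f N (real i - 1) \<and>
         rnd f N (real i) - rnd f N (real i - 1) \<le> ln (norm (\<zeta> i)) + ln (2 * real d) / 2 ^ N"
proof -
  define c where "c = lead_coeff f"
  have fnz: "f \<noteq> 0" using f0 by auto
  have cnz: "c \<noteq> 0" using fnz unfolding c_def by simp
  have F: "f = smult c (\<Prod>k=1..d. [:- \<zeta> k, 1:])" using fprod unfolding c_def .
  have znz: "\<zeta> k \<noteq> 0" if "k \<in> {1..d}" for k
  proof
    assume "\<zeta> k = 0"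
    then have "poly (\<Prod>k=1..d. [:- \<zeta> k, 1:]) 0 = 0" using that by (simp add: poly_prod) (metis atLeastAtMost_iff)
    then show False using f0 F by (metis mult_zero_right poly_smult)
  qed
  have mono: "norm (\<zeta> a) \<le> norm (\<zeta> b)" if "1 \<le> a" "a \<le> b" "b \<le> d" for a b
    using that
  proof (induction b)
    case 0 then show ?case by simp
  next
    case (Suc b)
    show ?case
    proof (cases "a = Suc b")
      case True then show ?thesis by simp
    next
      case False
      then have "norm (\<zeta> a) \<le> norm (\<zeta> b)" using Suc by auto
      also have "\<dots> \<le> norm (\<zeta> (Suc b))" using mono1[of b] Suc False by auto
      finally show ?thesis .
    qed
  qed
  define M :: nat where "M = 2^N"
  have Mpos: "M > 0" unfolding M_def by simp
  define w where "w k = \<zeta> k ^ M" for k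
  define C where "C = c ^ M"
  have Cnz: "C \<noteq> 0" using cnz unfolding C_def by simp
  have wnz: "w k \<noteq> 0" if "k \<in> {1..d}" for k using znz[OF that] unfolding w_def by simp
  have wmono: "norm (w a) \<le> norm (w b)" if "1 \<le> a" "a \<le> b" "b \<le> d" for a b
    unfolding w_def norm_power using mono[OF that] by (intro power_mono) auto
  let ?g = "(graeffe ^^ N) f"
  have G: "?g = smult C (\<Prod>k=1..d. [:- w k, 1:])"
    unfolding C_def w_def M_def by (subst F) (rule graeffe_iter[OF cnz])
  have dg: "degree ?g = d" using G Cnz degree_lin_prod[of w "{1..d}"] by simp
  have gd: "coeff ?g d = C"
  proof -
    have "coeff ?g d = lead_coeff ?g" using dg by simp
    also have "\<dots> = C" unfolding G by (simp add: lead_coeff_prod)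
    finally show ?thesis .
  qed
  have g0: "coeff ?g 0 \<noteq> 0"
  proof -
    have "coeff ?g 0 = C * (\<Prod>k=1..d. - w k)" by (simp add: G poly_0_coeff_0[symmetric] poly_prod)
    then show ?thesis using Cnz wnz by simp
  qed
  have gbig: "coeff ?g k = 0" if "k > d" for k using that dg by (simp add: coeff_eq_0)
  define a0 where "a0 = - ln (norm (coeff ?g 0)) / 2^N"
  define aD where "aD = - ln (norm (coeff ?g d)) / 2^N"
  have e0: "newton_pt f N 0 = ereal a0" using g0 unfolding a0_def newton_pt_def Let_def by simp
  have eD: "newton_pt f N (degree f) = ereal aD" using gd Cnz df unfolding aD_def newton_pt_def Let_def by simp
  have wi: "norm (w i) > 0" using wnz[of i] i by auto
  have dpos: "real d > 0" using i by simp
  have lnw: "ln (norm (w i)) = real M * ln (norm (\<zeta> i))" unfolding w_def norm_power by (simp add: ln_realpow)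
  have M2: "real M = 2 ^ N" unfolding M_def by simp
  have lower: "ln (norm (\<zeta> i)) - ln (2 * real d) / 2 ^ N \<le> rnd f N (real i) - rnd f N (real i - 1)"
  proof -
    define K where "K = {i..d}"
    define z where "z k = 1 / w k" for k
    define p where "p = smult (C * (\<Prod>k\<in>K. - w k)) (\<Prod>k\<in>{1..<i}. [:- w k, 1:])"
    define \<rho> where "\<rho> = norm (w i) / (2 * real d)"
    have rp: "\<rho> > 0" using wi dpos unfolding \<rho>_def by simp
    have split: "{1..d} = {1..<i} \<union> K" using i unfolding K_def by auto
    have "(\<Prod>k=1..d. [:- w k, 1:]) = (\<Prod>k\<in>{1..<i}. [:- w k, 1:]) * (\<Prod>k\<in>K. [:- w k, 1:])"
      unfolding split by (rule prod.union_disjoint) (auto simp: K_def)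
    also have "(\<Prod>k\<in>K. [:- w k, 1:]) = (\<Prod>k\<in>K. smult (- w k) [:1, - z k:])"
    proof (intro prod.cong refl)
      fix k assume "k \<in> K"
      then have "w k \<noteq> 0" using wnz i unfolding K_def by auto
      then show "[:- w k, 1:] = smult (- w k) [:1, - z k:]" unfolding z_def by simp
    qed
    also have "\<dots> = smult (\<Prod>k\<in>K. - w k) (\<Prod>k\<in>K. [:1, - z k:])"
      by (rule prod_smult_poly) (simp add: K_def)
    finally have hp: "?g = p * (\<Prod>k\<in>K. [:1, - z k:])" unfolding G p_def by (simp add: mult_ac)
    have dp: "degree p \<le> i - 1"
      unfolding p_def using degree_lin_prod[of w "{1..<i}"] by simp
    have zs: "norm (z k) \<le> 1 / norm (w i)" if "k \<in> K" for k
    proof -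
      have "norm (w i) \<le> norm (w k)" using that i unfolding K_def by (intro wmono) auto
      then show ?thesis unfolding z_def using wi by (simp add: norm_divide frac_le)
    qed
    have small: "real (card K) * (1 / norm (w i)) * \<rho> \<le> 1/2"
      unfolding \<rho>_def K_def using wi dpos i by (simp add: field_simps)
    have core_app: "norm (coeff ?g J) * \<rho>^J \<le> Max ((\<lambda>m. norm (coeff ?g m) * \<rho>^m) ` {..i-1})" for J
      by (rule core[OF hp _ dp zs small rp]) (simp add: K_def)
    obtain m where m: "m \<in> {..i-1}" and mM: "Max ((\<lambda>m. norm (coeff ?g m) * \<rho>^m) ` {..i-1}) = norm (coeff ?g m) * \<rho>^m"
    proof -
      have "Max ((\<lambda>m. norm (coeff ?g m) * \<rho>^m) ` {..i-1}) \<in> (\<lambda>m. norm (coeff ?g m) * \<rho>^m) ` {..i-1}"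
        by (rule Max_in) auto
      then show ?thesis using that by (metis (no_types, lifting) imageE)
    qed
    have gm: "coeff ?g m \<noteq> 0"
    proof
      assume "coeff ?g m = 0"
      then have "norm (coeff ?g 0) * \<rho>^0 \<le> 0" using core_app[of 0] mM by simp
      then show False using g0 by simp
    qed
    obtain \<alpha> where l: "\<forall>k. ereal (\<alpha> + (ln \<rho> / 2^N) * real k) \<le> newton_pt f N k"
      and vm: "newton_pt f N m = ereal (\<alpha> + (ln \<rho> / 2^N) * real m)"
      using maxterm_line[OF rp gm, of ] core_app mM by metis
    have "ln \<rho> / 2^N \<le> rnd f N (real i) - rnd f N (real i - 1)"
      using slope_lower[of \<alpha> "ln \<rho> / 2^N" f N m i a0 aD] l vm m i df e0 eD by auto
    moreover have "ln \<rho> / 2^N = ln (norm (\<zeta> i)) - ln (2 * real d) / 2 ^ N"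
      unfolding \<rho>_def using wi dpos lnw M2 by (simp add: ln_div field_simps)
    ultimately show ?thesis by simp
  qed
  have upper: "rnd f N (real i) - rnd f N (real i - 1) \<le> ln (norm (\<zeta> i)) + ln (2 * real d) / 2 ^ N"
  proof -
    let ?h = "reflect_poly ?g"
    define K where "K = {1..i}"
    define p where "p = smult C (\<Prod>k\<in>{Suc i..d}. [:1, - w k:])"
    define \<rho>' where "\<rho>' = 1 / (2 * real d * norm (w i))"
    define \<rho> where "\<rho> = 2 * real d * norm (w i)"
    have rp': "\<rho>' > 0" using wi dpos unfolding \<rho>'_def by simp
    have rp: "\<rho> > 0" using wi dpos unfolding \<rho>_def by simp
    have rr: "\<rho>' = inverse \<rho>" unfolding \<rho>_def \<rho>'_def by (simp add: field_simps)
    have split: "{1..d} = {Suc i..d} \<union> K" using i unfolding K_def by auto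
    have refl1: "reflect_poly [:- w k, 1:] = [:1, - w k:]" if "k \<in> {1..d}" for k
      using wnz[OF that] by (simp add: reflect_poly_def)
    have "?h = smult C (\<Prod>k=1..d. [:1, - w k:])"
      unfolding G reflect_poly_smult reflect_poly_prod using refl1 by simp
    also have "(\<Prod>k=1..d. [:1, - w k:]) = (\<Prod>k\<in>{Suc i..d}. [:1, - w k:]) * (\<Prod>k\<in>K. [:1, - w k:])"
      unfolding split by (rule prod.union_disjoint) (auto simp: K_def)
    finally have hp: "?h = p * (\<Prod>k\<in>K. [:1, - w k:])" unfolding p_def by (simp add: mult_ac)
    have dp: "degree p \<le> d - i"
      unfolding p_def using degree_lin_prod_le[of "{Suc i..d}" w] by simp
    have zs: "norm (w k) \<le> norm (w i)" if "k \<in> K" for k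
      using that i unfolding K_def by (intro wmono) auto
    have small: "real (card K) * norm (w i) * \<rho>' \<le> 1/2"
      unfolding \<rho>'_def K_def using wi dpos i by (simp add: field_simps)
    have core_app: "norm (coeff ?h J) * \<rho>'^J \<le> Max ((\<lambda>m. norm (coeff ?h m) * \<rho>'^m) ` {..d-i})" for J
      by (rule core[OF hp _ dp zs small rp']) (simp add: K_def)
    obtain m where m: "m \<in> {..d-i}" and mM: "Max ((\<lambda>m. norm (coeff ?h m) * \<rho>'^m) ` {..d-i}) = norm (coeff ?h m) * \<rho>'^m"
    proof -
      have "Max ((\<lambda>m. norm (coeff ?h m) * \<rho>'^m) ` {..d-i}) \<in> (\<lambda>m. norm (coeff ?h m) * \<rho>'^m) ` {..d-i}"
        by (rule Max_in) auto
      then show ?thesis using that by (metis (no_types, lifting) imageE)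
    qed
    define j where "j = d - m"
    have ij: "i \<le> j" "j \<le> d" using m i unfolding j_def by auto
    have ch: "coeff ?h k = coeff ?g (d - k)" if "k \<le> d" for k
      using that dg by (simp add: coeff_reflect_poly)
    have mx: "norm (coeff ?g k) * \<rho>^k \<le> norm (coeff ?g j) * \<rho>^j" for k
    proof (cases "k \<le> d")
      case False then show ?thesis using gbig[of k] rp by simp
    next
      case True
      have inv: "\<rho>'^n * \<rho>^n = 1" for n
        unfolding rr using rp by (simp add: power_mult_distrib[symmetric])
      have e1: "\<rho>^d = \<rho>^k * \<rho>^(d-k)" using True by (simp add: power_add[symmetric])
      have "norm (coeff ?h (d - k)) = norm (coeff ?g k)" using ch[of "d-k"] True by simp
      then have "\<rho>^d * (norm (coeff ?h (d - k)) * \<rho>'^(d-k)) = norm (coeff ?g k) * \<rho>^k * (\<rho>'^(d-k) * \<rho>^(d-k))"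
        unfolding e1 by (simp add: mult_ac)
      then have "norm (coeff ?g k) * \<rho>^k = \<rho>^d * (norm (coeff ?h (d - k)) * \<rho>'^(d-k))"
        using inv by simp
      also have "\<dots> \<le> \<rho>^d * (norm (coeff ?h m) * \<rho>'^m)"
        using core_app[of "d-k"] mM rp by (intro mult_left_mono) auto
      also have "\<dots> = norm (coeff ?g j) * \<rho>^j"
      proof -
        have e2: "\<rho>^d = \<rho>^j * \<rho>^m" using m i unfolding j_def by (simp add: power_add[symmetric])
        have "norm (coeff ?h m) = norm (coeff ?g j)" using ch[of m] m i unfolding j_def by simp
        then show ?thesis unfolding e2 using inv[of m] by (simp add: mult_ac)
      qed
      finally show ?thesis .
    qed
    have gj: "coeff ?g j \<noteq> 0"
    proof
      assume "coeff ?g j = 0"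
      then have "norm (coeff ?g d) * \<rho>^d \<le> 0" using mx[of d] by simp
      moreover have "norm (coeff ?g d) * \<rho>^d > 0" using gd Cnz rp by simp
      ultimately show False by linarith
    qed
    obtain \<alpha> where l: "\<forall>k. ereal (\<alpha> + (ln \<rho> / 2^N) * real k) \<le> newton_pt f N k"
      and vj: "newton_pt f N j = ereal (\<alpha> + (ln \<rho> / 2^N) * real j)"
      using maxterm_line[OF rp gj] mx by metis
    have "rnd f N (real i) - rnd f N (real i - 1) \<le> ln \<rho> / 2^N"
      using slope_upper[of \<alpha> "ln \<rho> / 2^N" f N j i a0 aD] l vj ij i df e0 eD by auto
    moreover have "ln \<rho> / 2^N = ln (norm (\<zeta> i)) + ln (2 * real d) / 2 ^ N"
      unfolding \<rho>_def using wi dpos lnw M2 by (simp add: ln_mult field_simps)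
    ultimately show ?thesis by simp
  qed
  show ?thesis using lower upper by simp
qed


theorem mainTheorem2:
  fixes f :: "complex poly" and d :: nat and \<zeta> :: "nat \<Rightarrow> complex"
  assumes "degree f = d"
    and "poly f 0 \<noteq> 0"
    and "f = smult (lead_coeff f) (\<Prod>i=1..d. [:- \<zeta> i, 1:])"
    and "\<And>i. 1 \<le> i \<Longrightarrow> i < d \<Longrightarrow> norm (\<zeta> i) \<le> norm (\<zeta> (Suc i))"
  shows "\<forall>i\<in>{1..d}.
     ((\<lambda>N. rnd f N (real i) - rnd f N (real i - 1)) \<longlonglongrightarrow> ln (norm (\<zeta> i))) \<and>
     (\<forall>N. \<bar>rnd f N (real i) - rnd f N (real i - 1) - ln (norm (\<zeta> i))\<bar> \<le> ln (2 * real d) / 2 ^ N)"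
proof
  fix i assume i: "i \<in> {1..d}"
  let ?s = "\<lambda>N. rnd f N (real i) - rnd f N (real i - 1)"
  let ?L = "ln (norm (\<zeta> i))"
  have b1: "?L - ln (2 * real d) / 2 ^ N \<le> ?s N" for N
    using slope_bounds[OF assms(1-4), of i N] i by simp
  have b2: "?s N \<le> ?L + ln (2 * real d) / 2 ^ N" for N
    using slope_bounds[OF assms(1-4), of i N] i by simp
  have lim0: "(\<lambda>N. ln (2 * real d) / 2 ^ N) \<longlonglongrightarrow> 0"
    by (rule LIMSEQ_divide_realpow_zero) simp
  have t1: "(\<lambda>N. ?L - ln (2 * real d) / 2 ^ N) \<longlonglongrightarrow> ?L"
    using tendsto_diff[OF tendsto_const[of ?L] lim0] by simp
  have t2: "(\<lambda>N. ?L + ln (2 * real d) / 2 ^ N) \<longlonglongrightarrow> ?L"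
    using tendsto_add[OF tendsto_const[of ?L] lim0] by simp
  have "?s \<longlonglongrightarrow> ?L"
    by (rule tendsto_sandwich[OF always_eventually always_eventually t1 t2]) (use b1 b2 in blast)+
  moreover have "\<forall>N. \<bar>?s N - ?L\<bar> \<le> ln (2 * real d) / 2 ^ N"
  proof
    fix N show "\<bar>?s N - ?L\<bar> \<le> ln (2 * real d) / 2 ^ N" using b1[of N] b2[of N] by (simp only: abs_le_iff) linarith
  qed
  ultimately show "(?s \<longlonglongrightarrow> ?L) \<and> (\<forall>N. \<bar>?s N - ?L\<bar> \<le> ln (2 * real d) / 2 ^ N)" by blast
qed

end
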